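(* Let $p\ge2$ be an integer and let $f\in\mathcal{R}$ satisfy $U_pf=\lambda f$ for some $\lambda\neq0$. If $f(x)=x^m\tilde f(x)$ for some positive integer $m$ and some rational function $\tilde f$ regular at $0$ with $\tilde f(0)\neq0$, then $p\nmid m$.
   Context: $\mathcal{R}$ denotes the real vector space of rational functions $f(x)=A(x)/B(x)$ with $A,B\in\mathbb{R}[x]$, $B(0)\neq 0$ and $\deg A<\deg B$. For $f$ with Taylor expansion $f(x)=\sum_{n\ge0}a_nx^n$ at $0$ and a positive integer $p$, $U_pf(x)=\sum_{n\ge 0}a_{pn}x^n$. *)

theory Defs
  imports "HOL-Computational_Algebra.Computational_Algebra"
begin

text \<open>A rational function A/B with B(0) \<noteq> 0 is represented by the pair of real
polynomials (A, B). Its Taylor expansion at 0 is the formal power series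
fps_of_poly A / fps_of_poly B.\<close>

definition taylor :: "real poly \<Rightarrow> real poly \<Rightarrow> real fps" where
  "taylor A B = fps_of_poly A / fps_of_poly B"

definition in_R :: "real poly \<Rightarrow> real poly \<Rightarrow> bool" where
  "in_R A B \<longleftrightarrow> poly B 0 \<noteq> 0 \<and> degree A < degree B"

definition U :: "nat \<Rightarrow> 'a fps \<Rightarrow> 'a fps" where
  "U p F = Abs_fps (\<lambda>n. fps_nth F (p * n))"

end

theory Submission
  imports Defs
begin

theorem mainTheorem13:
  fixes p m :: nat and A B C D :: "real poly" and lam :: real
  assumes "p \<ge> 2"
    and "in_R A B"
    and "lam \<noteq> 0"
    and "U p (taylor A B) = fps_const lam * taylor A B"
    and "m > 0"
    and "poly D 0 \<noteq> 0" and "poly C 0 \<noteq> 0"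
    and "A * D = monom 1 m * C * B"
  shows "\<not> p dvd m"
proof
  assume pm: "p dvd m"
  define F where "F = taylor A B"
  have B0: "fps_nth (fps_of_poly B) 0 \<noteq> 0" using assms(2) by (simp add: in_R_def poly_0_coeff_0)
  have FB: "F * fps_of_poly B = fps_of_poly A"
    unfolding F_def taylor_def using B0 by (simp add: fps_divide_unit inverse_mult_eq_1)
  have "F * fps_of_poly D * fps_of_poly B = fps_X ^ m * fps_of_poly C * fps_of_poly B"
  proof -
    have "fps_of_poly (A * D) = fps_of_poly (monom 1 m * C * B)" using assms(8) by simp
    hence e: "fps_of_poly A * fps_of_poly D = fps_X ^ m * fps_of_poly C * fps_of_poly B"
      by (simp only: fps_of_poly_mult fps_of_poly_monom')
    have "F * fps_of_poly D * fps_of_poly B = F * fps_of_poly B * fps_of_poly D"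
      by (simp only: mult_ac)
    also have "\<dots> = fps_of_poly A * fps_of_poly D" by (simp only: FB)
    finally show ?thesis using e by (rule trans)
  qed
  moreover have "fps_of_poly B \<noteq> 0" using B0 by auto
  ultimately have FD: "F * fps_of_poly D = fps_X ^ m * fps_of_poly C" by simp
  have D0: "fps_of_poly D \<noteq> 0" "subdegree (fps_of_poly D) = 0"
    using assms(6) by (auto simp: poly_0_coeff_0 subdegree_eq_0_iff)
  have C0: "fps_of_poly C \<noteq> 0" "subdegree (fps_of_poly C) = 0"
    using assms(7) by (auto simp: poly_0_coeff_0 subdegree_eq_0_iff)
  have RHS: "fps_X ^ m * fps_of_poly C \<noteq> 0" "subdegree (fps_X ^ m * fps_of_poly C) = m"
    using C0 by (auto simp: subdegree_mult)
  have F0: "F \<noteq> 0" using FD RHS by auto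
  have "subdegree F = m" using FD RHS F0 D0 by (metis subdegree_mult add_0_right)
  hence Fm: "fps_nth F m \<noteq> 0" using F0 nth_subdegree_nonzero by metis
  have Fk: "\<And>k. k < m \<Longrightarrow> fps_nth F k = 0"
    using \<open>subdegree F = m\<close> nth_less_subdegree_zero by metis
  obtain k where mk: "m = p * k" using pm by auto
  have "k > 0" using mk assms(5) by (cases k) auto
  have "k < m" unfolding mk using \<open>k > 0\<close> assms(1) n_less_m_mult_n by simp
  have "fps_nth (U p F) k = lam * fps_nth F k" using assms(4) F_def by simp
  hence "fps_nth F m = 0" using Fk[OF \<open>k < m\<close>] mk by (simp add: U_def)
  thus False using Fm by simp
qed

end
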